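(* Let $z\in\mathbb{N}$, $z\ge1$, and let $\alpha\in\{0,1,2\}^*$ be the standard base-3 representation of $z$ (no leading zeros). Let $x_0<0$. In the limit configuration $c_\infty[\alpha]$, column $x_0$ contains a southmost cell $(x_0,y_b)$ whose sum bit is defined; its sum bit is $0$, all cells $(x_0,y)$ with $y_b<y\le|\alpha|$ are defined, and the base-$3'$ word $\gamma$ they give satisfies $[\![\gamma]\!]_{3'}=T^{|x_0|}(z)$.
   Context: The Collatz map $T:\mathbb{N}\to\mathbb{N}$ is $T(x)=x/2$ for even $x$ and $T(x)=(3x+1)/2$ for odd $x$. Notation: $E=(1,0)$, $W=(-1,0)$, $N=(0,1)$, $S=(0,-1)$ in $\mathbb{Z}^2$; $[P]\in\{0,1\}$ equals $1$ iff $P$ holds. Strings are indexed from the right: $\alpha=\alpha_{k-1}\cdots\alpha_0$; $[\![\alpha]\!]_3=\sum_i\alpha_i3^i$. Base $3'$: words over $\{0,\bar0,1,\bar1\}$ with trit values $0\mapsto0$, $\bar0\mapsto1$, $1\mapsto1$, $\bar1\mapsto2$, and $[\![\gamma]\!]_{3'}=\sum_i\mathrm{val}(\gamma_i)3^i$. The symbols $0,\bar0,1,\bar1$ are identified with the cell states $(0,0),(0,1),(1,0),(1,1)$. The encoding $\mathrm{enc}:\{0,1,2\}^*\to\{0,\bar0,1,\bar1\}^*$ acts symbol by symbol: $0\mapsto0$, $2\mapsto\bar1$, and a digit $\alpha_i=1$ maps to $1$ if there exists $j<i$ with $\alpha_j\ne1$ and the largest such $j$ has $\alpha_j=2$, and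 to $\bar0$ otherwise. A vertical contiguous segment of defined cells gives the base-$3'$ word formed by the cells' states read from north (most significant) to south (least significant). The CQCA. State set $\Sigma=\{0,1,\bot\}^2\setminus\{(\bot,0),(\bot,1)\}$; a state $(s,c)$ has sum bit $s$ and carry bit $c$; it is undefined if $(\bot,\bot)$, half-defined if $s\in\{0,1\},c=\bot$, defined if $s,c\in\{0,1\}$. One step $F(C)$ of a configuration $C:\mathbb{Z}^2\to\Sigma$: first the non-local rule gives $C'$: $C'(u)=(0,1)$ if $C(u+W)=(1,\bot)$, $C(u)\in\{(0,\bot),(\bot,\bot)\}$ and $C(u+iE)\in\{(0,\bot),(\bot,\bot)\}$ for all $i\ge1$; otherwise $C'(u)=C(u)$. Then the local rule on $C'$ at all cells simultaneously: (i) if $C'(u)=(s,\bot)$ half-defined and $C'(u+E)=(s',c')$ defined, $F(C)(u)=(s,[s+s'+c'\ge2])$; (ii) if $C'(u)=(\bot,\bot)$, $C'(u+N)=(s,\bot)$ half-defined and $C'(u+N+E)=(s',c')$ defined, $F(C)(u)=((s+s'+c')\bmod2,\bot)$; (iii) otherwise $F(C)(u)=C'(u)$. For $\alpha\in\{0,1,2\}^*$ with $\gamma=\mathrm{enc}(\alpha)$, the initial configuration $c_0[\alpha]$ is: $c_0[\alpha](0,i)=\gamma_{i-1}$ for $1\le i\le|\alpha|$, $c_0[\alpha](x,|\alpha|)=(0,\bot)$ for all $x<0$, and $(\bot,\bot)$ elsewhere. Each cell's state in $F^i(c_0[\alpha])$ is eventually constant; $c_\infty[\alpha]$ is the pointwise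 limit. *)

theory Defs
  imports Main
begin

definition collatzT :: "nat \<Rightarrow> nat" where
  "collatzT x = (if even x then x div 2 else (3 * x + 1) div 2)"

(* A cell state is a pair (sum bit, carry bit); each bit is Some 0, Some 1, or None (= \<bottom>). *)
type_synonym cell = "nat option \<times> nat option"
type_synonym config = "int \<times> int \<Rightarrow> cell"

definition val3 :: "nat list \<Rightarrow> nat" where
  "val3 \<alpha> = (\<Sum>i<length \<alpha>. \<alpha> ! i * 3 ^ i)"

(* trit value of a defined cell: 0 -> 0, 0bar=(0,1) -> 1, 1=(1,0) -> 1, 1bar=(1,1) -> 2 *)
definition tval :: "cell \<Rightarrow> nat" where
  "tval c = the (fst c) + the (snd c)"

definition enc :: "nat list \<Rightarrow> nat \<Rightarrow> cell" where
  "enc \<alpha> i =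
     (if \<alpha> ! i = 0 then (Some 0, Some 0)
      else if \<alpha> ! i = 2 then (Some 1, Some 1)
      else if (\<exists>j<i. \<alpha> ! j \<noteq> 1) \<and> \<alpha> ! (GREATEST j. j < i \<and> \<alpha> ! j \<noteq> 1) = 2
           then (Some 1, Some 0)
      else (Some 0, Some 1))"

definition c0 :: "nat list \<Rightarrow> config" where
  "c0 \<alpha> = (\<lambda>(x, y).
     if x = 0 \<and> 1 \<le> y \<and> y \<le> int (length \<alpha>) then enc \<alpha> (nat (y - 1))
     else if x < 0 \<and> y = int (length \<alpha>) then (Some 0, None)
     else (None, None))"

definition nonlocal_step :: "config \<Rightarrow> config" where
  "nonlocal_step C = (\<lambda>(x, y).
     if C (x - 1, y) = (Some 1, None)
        \<and> C (x, y) \<in> {(Some 0, None), (None, None)}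
        \<and> (\<forall>i::int. i \<ge> 1 \<longrightarrow> C (x + i, y) \<in> {(Some 0, None), (None, None)})
     then (Some 0, Some 1) else C (x, y))"

definition local_step :: "config \<Rightarrow> config" where
  "local_step C = (\<lambda>(x, y).
     (case C (x, y) of
        (Some s, None) \<Rightarrow>
          (case C (x + 1, y) of
             (Some s', Some c') \<Rightarrow> (Some s, Some (if s + s' + c' \<ge> 2 then 1 else 0))
           | _ \<Rightarrow> C (x, y))
      | (None, None) \<Rightarrow>
          (case (C (x, y + 1), C (x + 1, y + 1)) of
             ((Some s, None), (Some s', Some c')) \<Rightarrow> (Some ((s + s' + c') mod 2), None)
           | _ \<Rightarrow> C (x, y))
      | _ \<Rightarrow> C (x, y)))"

definition cqca_step :: "config \<Rightarrow> config" where
  "cqca_step C = local_step (nonlocal_step C)"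

(* pointwise limit of the orbit (each cell is eventually constant) *)
definition c_inf :: "nat list \<Rightarrow> config" where
  "c_inf \<alpha> = (\<lambda>u. THE v. \<exists>n0. \<forall>n\<ge>n0. (cqca_step ^^ n) (c0 \<alpha>) u = v)"

end

theory Submission
  imports Defs
begin

definition vv :: "nat \<Rightarrow> nat \<Rightarrow> nat" where "vv z k = (collatzT ^^ k) z"

fun DD :: "nat \<Rightarrow> nat \<Rightarrow> nat \<Rightarrow> nat" where
  "DD L z 0 = L"
| "DD L z (Suc k) = DD L z k + (if odd (vv z k) then 1 else 0)"

fun sbn :: "(nat \<Rightarrow> nat) \<Rightarrow> nat \<Rightarrow> nat" where
  "sbn t 0 = 0"
| "sbn t (Suc d) = (sbn t d + t d) mod 2"

primrec colf :: "nat list \<Rightarrow> nat \<Rightarrow> nat \<Rightarrow> nat \<times> nat" where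
  "colf \<alpha> 0 = (\<lambda>d. (the (fst (enc \<alpha> (length \<alpha> - 1 - d))), the (snd (enc \<alpha> (length \<alpha> - 1 - d)))))"
| "colf \<alpha> (Suc k) = (let t = (\<lambda>d. if d < DD (length \<alpha>) (val3 \<alpha>) k then fst (colf \<alpha> k d) + snd (colf \<alpha> k d)
        else if d = DD (length \<alpha>) (val3 \<alpha>) k then vv (val3 \<alpha>) k mod 2 else 0)
     in (\<lambda>d. (sbn t d, (sbn t d + t d) div 2)))"

definition DA :: "nat list \<Rightarrow> nat \<Rightarrow> nat" where "DA \<alpha> k = DD (length \<alpha>) (val3 \<alpha>) k"
definition sb :: "nat list \<Rightarrow> nat \<Rightarrow> nat \<Rightarrow> nat" where "sb \<alpha> k d = fst (colf \<alpha> k d)"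
definition cb :: "nat list \<Rightarrow> nat \<Rightarrow> nat \<Rightarrow> nat" where "cb \<alpha> k d = snd (colf \<alpha> k d)"
definition trit :: "nat list \<Rightarrow> nat \<Rightarrow> nat \<Rightarrow> nat" where
  "trit \<alpha> k d = (if d < DA \<alpha> k then sb \<alpha> k d + cb \<alpha> k d
        else if d = DA \<alpha> k then vv (val3 \<alpha>) k mod 2 else 0)"

lemma trit_fun: "(\<lambda>d. if d < DD (length \<alpha>) (val3 \<alpha>) k then fst (colf \<alpha> k d) + snd (colf \<alpha> k d)
        else if d = DD (length \<alpha>) (val3 \<alpha>) k then vv (val3 \<alpha>) k mod 2 else 0) = trit \<alpha> k"
  by (rule ext) (simp add: trit_def DA_def sb_def cb_def)
lemma colf_Suc: "colf \<alpha> (Suc k) d = (sbn (trit \<alpha> k) d, (sbn (trit \<alpha> k) d + trit \<alpha> k d) div 2)"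
  unfolding colf.simps Let_def trit_fun by simp
declare colf.simps(2)[simp del]
lemma sb_Suc: "sb \<alpha> (Suc k) d = sbn (trit \<alpha> k) d"
  by (simp add: sb_def colf_Suc)
lemma cb_Suc: "cb \<alpha> (Suc k) d = (sbn (trit \<alpha> k) d + trit \<alpha> k d) div 2"
  by (simp add: cb_def colf_Suc)
lemma DA_0: "DA \<alpha> 0 = length \<alpha>" by (simp add: DA_def)
lemma DA_Suc: "DA \<alpha> (Suc k) = DA \<alpha> k + (if odd (vv (val3 \<alpha>) k) then 1 else 0)"
  by (simp add: DA_def)

lemma sbn_le: "sbn t d \<le> 1"
  by (cases d) auto

lemma enc_some: "enc \<alpha> i = (Some (the (fst (enc \<alpha> i))), Some (the (snd (enc \<alpha> i))))"
  by (simp add: enc_def)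
lemma enc_bits: "the (fst (enc \<alpha> i)) \<le> 1 \<and> the (snd (enc \<alpha> i)) \<le> 1"
  by (simp add: enc_def)

lemma bits: "sb \<alpha> k d \<le> 1 \<and> cb \<alpha> k d \<le> 1"
proof (induction k arbitrary: d)
  case 0 then show ?case using enc_bits by (simp add: sb_def cb_def)
next
  case (Suc k)
  have "trit \<alpha> k d \<le> 2" for d using Suc.IH[of d] by (simp add: trit_def)
  then have "trit \<alpha> k d \<le> 2" "sbn (trit \<alpha> k) d \<le> 1" using sbn_le by auto
  then show ?case by (simp add: sb_Suc cb_Suc)
qed

lemma trit_le: "trit \<alpha> k d \<le> 2"
  using bits[of \<alpha> k d] by (simp add: trit_def)

lemma sb_Suc_0: "sb \<alpha> (Suc k) 0 = 0" by (simp add: sb_Suc)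

fun hor :: "(nat \<Rightarrow> nat) \<Rightarrow> nat \<Rightarrow> nat" where
  "hor f 0 = 0"
| "hor f (Suc n) = 3 * hor f n + f n"

lemma hor_cong: "(\<And>d. d < n \<Longrightarrow> f d = f' d) \<Longrightarrow> hor f n = hor f' n"
  by (induction n) auto

lemma hor_sbn: "hor t n = 2 * hor (\<lambda>d. sbn t d + (sbn t d + t d) div 2) n + sbn t n"
proof (induction n)
  case 0 then show ?case by simp
next
  case (Suc n)
  have "sbn t n + t n = 2 * ((sbn t n + t n) div 2) + sbn t (Suc n)" by simp
  then show ?case using Suc by simp
qed

lemma DA_ge: "DA \<alpha> k \<ge> length \<alpha>"
  by (induction k) (auto simp: DA_0 DA_Suc)

lemma DA_mono: "j \<le> k \<Longrightarrow> DA \<alpha> j \<le> DA \<alpha> k"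
  by (induction k) (auto simp: DA_Suc le_Suc_eq)

lemma DA_eq_even: "j < k \<Longrightarrow> DA \<alpha> j = DA \<alpha> k \<Longrightarrow> even (vv (val3 \<alpha>) j)"
  using DA_mono[of "Suc j" k \<alpha>] DA_mono[of j k \<alpha>] by (auto simp: DA_Suc split: if_splits)

lemma tval_enc: "\<forall>d\<in>set \<alpha>. d < 3 \<Longrightarrow> i < length \<alpha> \<Longrightarrow> the (fst (enc \<alpha> i)) + the (snd (enc \<alpha> i)) = \<alpha> ! i"
proof -
  assume a: "\<forall>d\<in>set \<alpha>. d < 3" "i < length \<alpha>"
  then have "\<alpha> ! i < 3" by auto
  then show ?thesis by (auto simp: enc_def)
qed

lemma hor_sum: "hor f n = (\<Sum>d<n. f d * 3 ^ (n - 1 - d))"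
proof (induction n)
  case 0 then show ?case by simp
next
  case (Suc n)
  have "(\<Sum>d<Suc n. f d * 3 ^ (Suc n - 1 - d)) = (\<Sum>d<n. f d * 3 ^ (Suc n - 1 - d)) + f n"
    by simp
  also have "(\<Sum>d<n. f d * 3 ^ (Suc n - 1 - d)) = 3 * (\<Sum>d<n. f d * 3 ^ (n - 1 - d))"
    unfolding sum_distrib_left
    by (rule sum.cong) (auto simp: Suc_diff_Suc power_Suc[symmetric] simp del: power_Suc)
  finally show ?case using Suc by simp
qed

lemma col0_val:
  assumes "\<forall>d\<in>set \<alpha>. d < 3"
  shows "hor (\<lambda>d. sb \<alpha> 0 d + cb \<alpha> 0 d) (length \<alpha>) = val3 \<alpha>"
proof -
  let ?L = "length \<alpha>"
  have "hor (\<lambda>d. sb \<alpha> 0 d + cb \<alpha> 0 d) ?L = (\<Sum>d<?L. \<alpha> ! (?L - 1 - d) * 3 ^ (?L - 1 - d))"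
    unfolding hor_sum
    by (rule sum.cong) (auto simp: sb_def cb_def tval_enc[OF assms])
  also have "\<dots> = (\<Sum>i<?L. \<alpha> ! i * 3 ^ i)"
    using sum.nat_diff_reindex[of "\<lambda>i. \<alpha> ! i * 3 ^ i" ?L] by simp
  finally show ?thesis by (simp add: val3_def)
qed

lemma vv_Suc: "vv z (Suc k) = collatzT (vv z k)" by (simp add: vv_def)

lemma col_step:
  assumes IH: "hor (\<lambda>d. sb \<alpha> k d + cb \<alpha> k d) (DA \<alpha> k) = vv (val3 \<alpha>) k"
  shows "sbn (trit \<alpha> k) (DA \<alpha> k) = vv (val3 \<alpha>) k mod 2
    \<and> sb \<alpha> (Suc k) (DA \<alpha> (Suc k)) = 0
    \<and> hor (\<lambda>d. sb \<alpha> (Suc k) d + cb \<alpha> (Suc k) d) (DA \<alpha> (Suc k)) = vv (val3 \<alpha>) (Suc k)"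
proof -
  let ?v = "vv (val3 \<alpha>) k" and ?D = "DA \<alpha> k" and ?t = "trit \<alpha> k"
  let ?U = "\<lambda>n. hor (\<lambda>d. sb \<alpha> (Suc k) d + cb \<alpha> (Suc k) d) n"
  have U: "?U n = hor (\<lambda>d. sbn ?t d + (sbn ?t d + ?t d) div 2) n" for n
    by (simp add: sb_Suc cb_Suc)
  have ht: "hor ?t ?D = ?v"
    using IH by (metis (no_types, lifting) hor_cong trit_def)
  have h1: "?v = 2 * ?U ?D + sbn ?t ?D" using hor_sbn[of ?t ?D] ht U by simp
  have s1: "sbn ?t ?D \<le> 1" by (rule sbn_le)
  have p2: "sbn ?t ?D = ?v mod 2" using h1 s1 by presburger
  show ?thesis
  proof (cases "odd ?v")
    case False
    then have D': "DA \<alpha> (Suc k) = ?D" by (simp add: DA_Suc)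
    have "sbn ?t ?D = 0" using p2 False by simp
    moreover have "?U ?D = ?v div 2" using h1 \<open>sbn ?t ?D = 0\<close> by simp
    ultimately show ?thesis using p2 False D' by (simp add: sb_Suc vv_Suc collatzT_def)
  next
    case True
    then have D': "DA \<alpha> (Suc k) = Suc ?D" by (simp add: DA_Suc)
    have "?v mod 2 = 1" using True by (simp add: odd_iff_mod_2_eq_one)
    then have tD: "?t ?D = 1" by (simp add: trit_def)
    have h2: "hor ?t (Suc ?D) = 3 * ?v + 1" using ht tD by simp
    have h3: "3 * ?v + 1 = 2 * ?U (Suc ?D) + sbn ?t (Suc ?D)" using hor_sbn[of ?t "Suc ?D"] h2 U by simp
    have s2: "sbn ?t (Suc ?D) \<le> 1" by (rule sbn_le)
    have "sbn ?t (Suc ?D) = 0" using h3 s2 True by presburger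
    moreover have "?U (Suc ?D) = (3 * ?v + 1) div 2" using h3 calculation by simp
    ultimately show ?thesis using p2 True D' by (simp add: sb_Suc vv_Suc collatzT_def)
  qed
qed

lemma col_val:
  assumes "\<forall>d\<in>set \<alpha>. d < 3"
  shows "hor (\<lambda>d. sb \<alpha> k d + cb \<alpha> k d) (DA \<alpha> k) = vv (val3 \<alpha>) k"
proof (induction k)
  case 0
  then show ?case using col0_val[OF assms] by (simp add: DA_0 vv_def)
next
  case (Suc k)
  then show ?case using col_step by blast
qed

lemma sbn_bottom: "\<forall>d\<in>set \<alpha>. d < 3 \<Longrightarrow> sbn (trit \<alpha> k) (DA \<alpha> k) = vv (val3 \<alpha>) k mod 2"
  using col_step col_val by blast

lemma sb_bottom: "\<forall>d\<in>set \<alpha>. d < 3 \<Longrightarrow> 0 < k \<Longrightarrow> sb \<alpha> k (DA \<alpha> k) = 0"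
  using col_step col_val by (metis gr0_conv_Suc)


definition g :: "nat list \<Rightarrow> nat \<Rightarrow> nat \<Rightarrow> nat \<Rightarrow> nat \<Rightarrow> cell" where
  "g \<alpha> e n k d =
    (if d < DA \<alpha> k then
       (if k = 0 \<or> d = 0 \<or> d + k \<le> n + 1
        then (Some (sb \<alpha> k d), if k = 0 \<or> d + k \<le> n then Some (cb \<alpha> k d) else None)
        else (None, None))
     else if d = DA \<alpha> k then
       (if odd (vv (val3 \<alpha>) k) \<and> d + k + e \<le> n then (Some 0, Some 1)
        else if k \<noteq> 0 \<and> d + k \<le> n + 1 then (Some 0, None) else (None, None))
     else (None, None))"

lemma gA: "d < DA \<alpha> k \<Longrightarrow> g \<alpha> e n k d =
       (if k = 0 \<or> d = 0 \<or> d + k \<le> n + 1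
        then (Some (sb \<alpha> k d), if k = 0 \<or> d + k \<le> n then Some (cb \<alpha> k d) else None)
        else (None, None))"
  by (simp add: g_def)
lemma gB: "d = DA \<alpha> k \<Longrightarrow> g \<alpha> e n k d =
       (if odd (vv (val3 \<alpha>) k) \<and> d + k + e \<le> n then (Some 0, Some 1)
        else if k \<noteq> 0 \<and> d + k \<le> n + 1 then (Some 0, None) else (None, None))"
  by (simp add: g_def)
lemma gC: "DA \<alpha> k < d \<Longrightarrow> g \<alpha> e n k d = (None, None)"
  by (simp add: g_def)

definition loc :: "cell \<Rightarrow> cell \<Rightarrow> cell \<Rightarrow> cell \<Rightarrow> cell" where
"loc c e nn ne = (case c of
        (Some s, None) \<Rightarrow>
          (case e of
             (Some s', Some c') \<Rightarrow> (Some s, Some (if s + s' + c' \<ge> 2 then 1 else 0))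
           | _ \<Rightarrow> c)
      | (None, None) \<Rightarrow>
          (case (nn, ne) of
             ((Some s, None), (Some s', Some c')) \<Rightarrow> (Some ((s + s' + c') mod 2), None)
           | _ \<Rightarrow> c)
      | _ \<Rightarrow> c)"

lemma local_step_loc: "local_step C (x, y) = loc (C (x, y)) (C (x + 1, y)) (C (x, y + 1)) (C (x + 1, y + 1))"
  by (simp add: local_step_def loc_def)

lemma loc_def_cell[simp]: "loc (Some a, Some b) e nn ne = (Some a, Some b)"
  by (simp add: loc_def)
lemma loc_half_def[simp]: "loc (Some s, None) (Some s', Some c') nn ne = (Some s, Some (if s + s' + c' \<ge> 2 then 1 else 0))"
  by (simp add: loc_def)
lemma loc_half_nd: "snd e = None \<or> fst e = None \<Longrightarrow> loc (Some s, None) e nn ne = (Some s, None)"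
  by (cases e) (auto simp: loc_def split: option.splits)
lemma loc_half_E[simp]: "loc (Some s, None) (None, None) nn ne = (Some s, None)"
  "loc (Some s, None) (Some s', None) nn ne = (Some s, None)"
  by (simp_all add: loc_def)
lemma loc_empty_fire[simp]: "loc (None, None) e (Some s, None) (Some s', Some c') = (Some ((s + s' + c') mod 2), None)"
  by (simp add: loc_def)
lemma loc_empty_nofire: "\<not> (\<exists>s s' c'. nn = (Some s, None) \<and> ne = (Some s', Some c')) \<Longrightarrow> loc (None, None) e nn ne = (None, None)"
  by (auto simp: loc_def split: option.splits prod.splits)
lemma loc_empty_E[simp]: "loc (None, None) e (None, None) ne = (None, None)"
  "loc (None, None) e nn (None, None) = (None, None)"
  "loc (None, None) e nn (Some s', None) = (None, None)"
  "loc (None, None) e (Some s, Some c) ne = (None, None)"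
  by (auto simp: loc_def split: option.splits prod.splits)

lemma carry_eq: "s \<le> 1 \<Longrightarrow> t \<le> 2 \<Longrightarrow> (if 2 \<le> s + t then 1 else (0::nat)) = (s + t) div 2"
  by auto

lemma carry3: "a \<le> 1 \<Longrightarrow> b \<le> 1 \<Longrightarrow> c \<le> 1 \<Longrightarrow> (if 2 \<le> a + b + c then 1 else (0::nat)) = (a + (b + c)) div 2"
  by (cases a; cases b; cases c) auto

lemma carry2: "b \<le> 1 \<Longrightarrow> c \<le> 1 \<Longrightarrow> (if 2 \<le> b + c then 1 else (0::nat)) = (b + c) div 2"
  by (cases b; cases c) auto

lemma DA_pos: "\<alpha> \<noteq> [] \<Longrightarrow> 0 < DA \<alpha> k"
  using DA_ge[of \<alpha> k] by (cases \<alpha>) auto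


lemma local_g0: "g \<alpha> 1 (Suc n) 0 d = loc (g \<alpha> 0 n 0 d) (None, None) nn (None, None)"
proof -
  consider "d < DA \<alpha> 0" | "d = DA \<alpha> 0" | "DA \<alpha> 0 < d" by linarith
  then show ?thesis
  proof cases
    case 1 then show ?thesis by (simp add: gA)
  next
    case 2 then show ?thesis by (simp add: gB)
  next
    case 3 then show ?thesis by (simp add: gC)
  qed
qed

lemma local_gS:
  assumes dig: "\<forall>d\<in>set \<alpha>. d < 3" and ne: "\<alpha> \<noteq> []"
  shows "g \<alpha> 1 (Suc n) (Suc j) d = loc (g \<alpha> 0 n (Suc j) d) (g \<alpha> 0 n j d)
            (if d = 0 then (None, None) else g \<alpha> 0 n (Suc j) (d - 1))
            (if d = 0 then (None, None) else g \<alpha> 0 n j (d - 1))"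
proof -
  let ?k = "Suc j" and ?D = "DA \<alpha> (Suc j)" and ?Dj = "DA \<alpha> j" and ?v = "vv (val3 \<alpha>) j"
  have DS: "?D = ?Dj + (if odd ?v then 1 else 0)" by (simp add: DA_Suc)
  have Dpos: "0 < ?Dj" using DA_pos[OF ne] .
  have tj1: "d' < ?Dj \<Longrightarrow> trit \<alpha> j d' = sb \<alpha> j d' + cb \<alpha> j d'" for d' by (simp add: trit_def)
  have tj2: "trit \<alpha> j ?Dj = ?v mod 2" by (simp add: trit_def)
  have sbS: "sb \<alpha> ?k (Suc d') = (sb \<alpha> ?k d' + trit \<alpha> j d') mod 2" for d' by (simp add: sb_Suc)
  have cbS: "cb \<alpha> ?k d' = (sb \<alpha> ?k d' + trit \<alpha> j d') div 2" for d' by (simp add: sb_Suc cb_Suc)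
  have bk: "sb \<alpha> ?k d' \<le> 1" for d' using bits by blast
  have bj: "sb \<alpha> j d' \<le> 1" "cb \<alpha> j d' \<le> 1" for d' using bits by blast+
  have sb0: "sb \<alpha> ?k 0 = 0" by (rule sb_Suc_0)
  have sbD: "sb \<alpha> ?k ?D = 0" using sb_bottom[OF dig] by blast
  consider "d = 0" | "0 < d" "d < ?D" | "d = ?D" | "?D < d" by linarith
  then show ?thesis
  proof cases
    case 1
    have D0: "0 < ?D" using DA_pos[OF ne] .
    show ?thesis
    proof (cases "?k \<le> n")
      case True then show ?thesis using 1 D0 by (simp add: gA)
    next
      case False
      show ?thesis
      proof (cases "n = j")
        case True
        have "trit \<alpha> j 0 = sb \<alpha> j 0 + cb \<alpha> j 0" using tj1 Dpos by blast
        then show ?thesis using 1 D0 Dpos True bj[of 0] cbS[of 0] sb0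
          by (simp add: gA carry2 carry3)
      next
        case False
        then show ?thesis using 1 D0 Dpos \<open>\<not> ?k \<le> n\<close> by (simp add: gA)
      qed
    qed
  next
    case 2
    then obtain d' where dd: "d = Suc d'" using gr0_conv_Suc by blast
    have dj: "d' < ?Dj" using 2 DS dd by (auto split: if_splits)
    have t': "trit \<alpha> j d' = sb \<alpha> j d' + cb \<alpha> j d'" using tj1 dj by blast
    consider "d + ?k \<le> n" | "d + ?k = n + 1" | "d + ?k = n + 2" | "n + 2 < d + ?k" by linarith
    then show ?thesis
    proof cases
      case 1 then show ?thesis using 2 by (simp add: gA)
    next
      case c: 2
      show ?thesis
      proof (cases "d < ?Dj")
        case True
        have "trit \<alpha> j d = sb \<alpha> j d + cb \<alpha> j d" using tj1 True by blast
        then show ?thesis using 2 c True bj[of d] bk[of d] cbS[of d]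
          by (simp add: gA carry2 carry3)
      next
        case False
        then have "d = ?Dj" "odd ?v" using 2 DS by (auto split: if_splits)
        then have "trit \<alpha> j d = 1" using tj2 by (simp add: odd_iff_mod_2_eq_one)
        then show ?thesis using 2 c \<open>d = ?Dj\<close> \<open>odd ?v\<close> bk[of d] cbS[of d]
          by (cases "sb \<alpha> ?k d = 0") (auto simp: gA gB)
      qed
    next
      case c: 3
      have n1: "g \<alpha> 0 n ?k d' = (Some (sb \<alpha> ?k d'), None)" using 2 c dd by (simp add: gA)
      have n2: "g \<alpha> 0 n j d' = (Some (sb \<alpha> j d'), Some (cb \<alpha> j d'))" using dj c dd by (simp add: gA)
      show ?thesis using 2 c dd n1 n2 sbS[of d'] t' by (simp add: gA add.assoc)
    next
      case c: 4
      have g0: "g \<alpha> 0 n ?k d = (None, None)" using 2 c by (simp add: gA)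
      have g1: "g \<alpha> 1 (Suc n) ?k d = (None, None)" using 2 c by (simp add: gA)
      show ?thesis
      proof (cases "d' = 0")
        case True
        have "g \<alpha> 0 n j d' = (Some (sb \<alpha> j d'), None)" using dj c dd True by (simp add: gA)
        then show ?thesis using g0 g1 dd by simp
      next
        case False
        have "g \<alpha> 0 n ?k d' = (None, None)" using 2 c dd False by (simp add: gA)
        then show ?thesis using g0 g1 dd by simp
      qed
    qed
  next
    case 3
    have dpos: "0 < d" using 3 DA_pos[OF ne] by simp
    then obtain d' where dd: "d = Suc d'" using gr0_conv_Suc by blast
    have dj: "d' \<le> ?Dj" using 3 DS dd by (auto split: if_splits)
    have east: "g \<alpha> 0 n j d = (None, None) \<or> g \<alpha> 0 n j d = (Some 0, None)"
    proof (cases "?Dj < d")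
      case True then show ?thesis by (simp add: gC)
    next
      case False
      then have "d = ?Dj" using 3 DA_mono[of j "Suc j" \<alpha>] by simp
      then have "even ?v" using 3 DA_eq_even[of j "Suc j" \<alpha>] by simp
      then show ?thesis using \<open>d = ?Dj\<close> by (simp add: gB)
    qed
    consider "odd (vv (val3 \<alpha>) ?k) \<and> d + ?k \<le> n" | "\<not> (odd (vv (val3 \<alpha>) ?k) \<and> d + ?k \<le> n)" "d + ?k \<le> n + 1"
      | "d + ?k = n + 2" | "n + 2 < d + ?k" by linarith
    then show ?thesis
    proof cases
      case 1 then show ?thesis using 3 by (simp add: gB)
    next
      case c: 2
      have "g \<alpha> 0 n ?k d = (Some 0, None)" using 3 c by (simp add: gB)
      moreover have "g \<alpha> 1 (Suc n) ?k d = (Some 0, None)" using 3 c by (simp add: gB)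
      ultimately show ?thesis using east by auto
    next
      case c: 3
      have g0: "g \<alpha> 0 n ?k d = (None, None)" using 3 c by (simp add: gB)
      have g1: "g \<alpha> 1 (Suc n) ?k d = (Some 0, None)" using 3 c by (simp add: gB)
      have n1: "g \<alpha> 0 n ?k d' = (Some (sb \<alpha> ?k d'), None)" using 3 c dd by (simp add: gA)
      have n2: "g \<alpha> 0 n j d' = (Some s', Some c') \<and> trit \<alpha> j d' = s' + c'" 
        if "s' = (if d' < ?Dj then sb \<alpha> j d' else 0)" "c' = (if d' < ?Dj then cb \<alpha> j d' else 1)" for s' c'
      proof (cases "d' < ?Dj")
        case True then show ?thesis using that c dd 3 tj1 by (simp add: gA)
      next
        case False
        then have "d' = ?Dj" using dj by simp
        then have "odd ?v" using 3 DS dd by (cases "odd ?v") simp_all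
        then show ?thesis using that c dd 3 tj2 \<open>d' = ?Dj\<close> False by (simp add: gB odd_iff_mod_2_eq_one)
      qed
      obtain s' c' where sc: "g \<alpha> 0 n j d' = (Some s', Some c')" "trit \<alpha> j d' = s' + c'" using n2 by blast
      have "(sb \<alpha> ?k d' + s' + c') mod 2 = 0" using sbS[of d'] sbD 3 dd sc(2) by (simp add: add.assoc)
      then show ?thesis using g0 g1 n1 sc dd by simp
    next
      case c: 4
      have g0: "g \<alpha> 0 n ?k d = (None, None)" using 3 c by (simp add: gB)
      have g1: "g \<alpha> 1 (Suc n) ?k d = (None, None)" using 3 c by (simp add: gB)
      show ?thesis
      proof (cases "d' = 0")
        case True
        have "g \<alpha> 0 n j d' = (Some (sb \<alpha> j d'), None)" using Dpos c dd True 3 by (simp add: gA)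
        then show ?thesis using g0 g1 dd by simp
      next
        case False
        have "g \<alpha> 0 n ?k d' = (None, None)" using 3 c dd False by (simp add: gA)
        then show ?thesis using g0 g1 dd by simp
      qed
    qed
  next
    case 4
    then obtain d' where dd: "d = Suc d'" using gr0_conv_Suc by (metis gr_zeroI not_less_zero)
    have g0: "g \<alpha> 0 n ?k d = (None, None)" using 4 by (simp add: gC)
    have g1: "g \<alpha> 1 (Suc n) ?k d = (None, None)" using 4 by (simp add: gC)
    show ?thesis
    proof (cases "?D < d'")
      case True
      then have "g \<alpha> 0 n ?k d' = (None, None)" by (simp add: gC)
      then show ?thesis using g0 g1 dd by simp
    next
      case False
      then have d'D: "d' = ?D" using 4 dd by simp
      have "g \<alpha> 0 n j d' = (None, None) \<or> g \<alpha> 0 n j d' = (Some 0, None)"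
      proof (cases "?Dj < d'")
        case True then show ?thesis by (simp add: gC)
      next
        case False
        then have "d' = ?Dj" using d'D DA_mono[of j "Suc j" \<alpha>] by simp
        then have "even ?v" using d'D DA_eq_even[of j "Suc j" \<alpha>] by simp
        then show ?thesis using \<open>d' = ?Dj\<close> by (simp add: gB)
      qed
      then show ?thesis using g0 g1 dd by auto
    qed
  qed
qed


definition G :: "nat list \<Rightarrow> nat \<Rightarrow> nat \<Rightarrow> config" where
  "G \<alpha> e n = (\<lambda>(x, y). if 0 < x \<or> int (length \<alpha>) < y then (None, None)
     else g \<alpha> e n (nat (- x)) (nat (int (length \<alpha>) - y)))"

lemma G_local:
  assumes dig: "\<forall>d\<in>set \<alpha>. d < 3" and ne: "\<alpha> \<noteq> []"
  shows "local_step (G \<alpha> 0 n) = G \<alpha> 1 (Suc n)"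
proof (rule ext, clarify)
  fix x y :: int
  let ?L = "int (length \<alpha>)"
  show "local_step (G \<alpha> 0 n) (x, y) = G \<alpha> 1 (Suc n) (x, y)"
    unfolding local_step_loc
  proof (cases "0 < x \<or> ?L < y")
    case True
    then show "loc (G \<alpha> 0 n (x, y)) (G \<alpha> 0 n (x + 1, y)) (G \<alpha> 0 n (x, y + 1)) (G \<alpha> 0 n (x + 1, y + 1)) =
        G \<alpha> 1 (Suc n) (x, y)" by (auto simp: G_def)
  next
    case False
    then have xy: "x \<le> 0" "y \<le> ?L" by auto
    define d where "d = nat (?L - y)"
    have dm: "nat (?L - (y + 1)) = d - 1" unfolding d_def by arith
    have nn: "G \<alpha> 0 n (x, y + 1) = (if d = 0 then (None, None) else g \<alpha> 0 n (nat (-x)) (d - 1))"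
      using xy dm by (auto simp: G_def d_def)
    show "loc (G \<alpha> 0 n (x, y)) (G \<alpha> 0 n (x + 1, y)) (G \<alpha> 0 n (x, y + 1)) (G \<alpha> 0 n (x + 1, y + 1)) =
        G \<alpha> 1 (Suc n) (x, y)"
    proof (cases "x = 0")
      case True
      then show ?thesis using xy local_g0 by (simp add: G_def)
    next
      case False
      define j where "j = nat (- x - 1)"
      have kj: "nat (- x) = Suc j" using False xy by (simp add: j_def)
      have e: "G \<alpha> 0 n (x + 1, y) = g \<alpha> 0 n j d" using False xy by (simp add: G_def j_def d_def)
      have ne': "G \<alpha> 0 n (x + 1, y + 1) = (if d = 0 then (None, None) else g \<alpha> 0 n j (d - 1))"
        using False xy dm by (auto simp: G_def j_def d_def)
      have c: "G \<alpha> 0 n (x, y) = g \<alpha> 0 n (Suc j) d" "G \<alpha> 1 (Suc n) (x, y) = g \<alpha> 1 (Suc n) (Suc j) d"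
        using xy kj by (simp_all add: G_def d_def)
      show ?thesis unfolding c e ne' nn kj using local_gS[OF dig ne] by simp
    qed
  qed
qed


abbreviation EE :: "cell set" where "EE \<equiv> {(Some 0, None), (None, None)}"

lemma west_half: "g \<alpha> 1 n k' d = (Some 1, None) \<Longrightarrow> k' \<noteq> 0 \<and> 0 < d \<and> d < DA \<alpha> k' \<and> n + 1 = d + k'"
proof -
  assume h: "g \<alpha> 1 n k' d = (Some 1, None)"
  consider "d < DA \<alpha> k'" | "d = DA \<alpha> k'" | "DA \<alpha> k' < d" by linarith
  then show ?thesis
  proof cases
    case 1
    then have k: "k' \<noteq> 0" using h by (auto simp: gA split: if_splits)
    then obtain j where "k' = Suc j" using not0_implies_Suc by blast
    then show ?thesis using h 1 sb_Suc_0[of \<alpha> j] by (cases d) (auto simp: gA split: if_splits)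
  next
    case 2 then show ?thesis using h by (auto simp: gB split: if_splits)
  next
    case 3 then show ?thesis using h by (auto simp: gC)
  qed
qed

lemma cur_E: "g \<alpha> 1 n k d \<in> EE \<Longrightarrow> d < DA \<alpha> (Suc k) \<Longrightarrow> n = d + k \<Longrightarrow> d = DA \<alpha> k \<and> odd (vv (val3 \<alpha>) k)"
proof -
  assume h: "g \<alpha> 1 n k d \<in> EE" "d < DA \<alpha> (Suc k)" "n = d + k"
  have "\<not> d < DA \<alpha> k" using h by (auto simp: gA)
  then show ?thesis using h(2) by (auto simp: DA_Suc split: if_splits)
qed

lemma g_diff: "g \<alpha> 0 n k d \<noteq> g \<alpha> 1 n k d \<Longrightarrow> d = DA \<alpha> k \<and> odd (vv (val3 \<alpha>) k) \<and> n = d + k"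
  by (auto simp: g_def split: if_splits)

lemma fire_west:
  assumes dig: "\<forall>d\<in>set \<alpha>. d < 3" and ne: "\<alpha> \<noteq> []" and od: "odd (vv (val3 \<alpha>) k)"
  shows "g \<alpha> 1 (DA \<alpha> k + k) (Suc k) (DA \<alpha> k) = (Some 1, None)"
proof -
  have "DA \<alpha> k < DA \<alpha> (Suc k)" using od by (simp add: DA_Suc)
  moreover have "sb \<alpha> (Suc k) (DA \<alpha> k) = 1"
    using sbn_bottom[OF dig, of k] od by (simp add: sb_Suc odd_iff_mod_2_eq_one)
  ultimately show ?thesis by (simp add: gA)
qed

lemma fire_cur: "g \<alpha> 1 (DA \<alpha> k + k) k (DA \<alpha> k) \<in> EE"
  by (simp add: gB)

lemma fire_east: "j < k \<Longrightarrow> g \<alpha> 1 n j (DA \<alpha> k) \<in> EE"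
proof -
  assume jk: "j < k"
  show ?thesis
  proof (cases "DA \<alpha> j < DA \<alpha> k")
    case True then show ?thesis by (simp add: gC)
  next
    case False
    then have eq: "DA \<alpha> j = DA \<alpha> k" using DA_mono[of j k \<alpha>] jk by simp
    then have "even (vv (val3 \<alpha>) j)" using DA_eq_even jk by blast
    then show ?thesis using eq[symmetric] by (simp add: gB)
  qed
qed

lemma g0_fire: "odd (vv (val3 \<alpha>) k) \<Longrightarrow> g \<alpha> 0 (DA \<alpha> k + k) k (DA \<alpha> k) = (Some 0, Some 1)"
  by (simp add: gB)

lemma G_nonlocal:
  assumes dig: "\<forall>d\<in>set \<alpha>. d < 3" and ne: "\<alpha> \<noteq> []"
  shows "nonlocal_step (G \<alpha> 1 n) = G \<alpha> 0 n"
proof (rule ext, clarify)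
  fix x y :: int
  let ?L = "int (length \<alpha>)"
  let ?C = "G \<alpha> 1 n"
  define k where "k = nat (- x)"
  define d where "d = nat (?L - y)"
  define Q where "Q = (x \<le> 0 \<and> y \<le> ?L \<and> d = DA \<alpha> k \<and> odd (vv (val3 \<alpha>) k) \<and> n = DA \<alpha> k + k)"
  let ?F = "?C (x - 1, y) = (Some 1, None) \<and> ?C (x, y) \<in> EE \<and> (\<forall>i::int. i \<ge> 1 \<longrightarrow> ?C (x + i, y) \<in> EE)"
  have ns: "nonlocal_step ?C (x, y) = (if ?F then (Some 0, Some 1) else ?C (x, y))"
    by (simp only: nonlocal_step_def prod.case)
  show "nonlocal_step ?C (x, y) = G \<alpha> 0 n (x, y)"
  proof (cases Q)
    case True
    then have xy: "x \<le> 0" "y \<le> ?L" and dD: "d = DA \<alpha> k" and od: "odd (vv (val3 \<alpha>) k)"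
      and nn: "n = DA \<alpha> k + k" by (auto simp: Q_def)
    have w: "?C (x - 1, y) = (Some 1, None)"
    proof -
      have "nat (- (x - 1)) = Suc k" using xy by (simp add: k_def)
      then have "?C (x - 1, y) = g \<alpha> 1 n (Suc k) d" using xy by (simp add: G_def d_def)
      then show ?thesis using fire_west[OF dig ne od] dD nn by simp
    qed
    have c: "?C (x, y) \<in> EE" using xy fire_cur[of \<alpha> k] dD nn by (simp add: G_def k_def d_def)
    have e: "?C (x + i, y) \<in> EE" if "i \<ge> 1" for i
    proof (cases "0 < x + i")
      case True then show ?thesis by (simp add: G_def)
    next
      case False
      then have "nat (- (x + i)) < k" using that xy by (simp add: k_def)
      then show ?thesis using False xy fire_east[of "nat (- (x + i))" k \<alpha> n] dD by (simp add: G_def d_def)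
    qed
    have "G \<alpha> 0 n (x, y) = (Some 0, Some 1)" using xy g0_fire[OF od] dD nn by (simp add: G_def k_def d_def)
    then show ?thesis using ns w c e by simp
  next
    case False
    have nf: "\<not> ?F"
    proof
      assume F: ?F
      then have w: "?C (x - 1, y) = (Some 1, None)" and c: "?C (x, y) \<in> EE" by auto
      have y: "y \<le> ?L" and x1: "x - 1 \<le> 0" using w by (auto simp: G_def split: if_splits)
      then have "g \<alpha> 1 n (nat (- (x - 1))) d = (Some 1, None)" using w by (simp add: G_def d_def)
      from west_half[OF this] have wh: "nat (- (x - 1)) \<noteq> 0" "d < DA \<alpha> (nat (- (x - 1)))" "n + 1 = d + nat (- (x - 1))"
        by auto
      then have x: "x \<le> 0" and kk: "nat (- (x - 1)) = Suc k" using x1 by (auto simp: k_def)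
      have "g \<alpha> 1 n k d \<in> EE" using c x y by (simp add: G_def k_def d_def)
      from cur_E[OF this] wh kk have "d = DA \<alpha> k \<and> odd (vv (val3 \<alpha>) k)" by simp
      then show False using False x y wh kk by (simp add: Q_def)
    qed
    have "G \<alpha> 0 n (x, y) = ?C (x, y)"
    proof (cases "0 < x \<or> ?L < y")
      case True then show ?thesis by (simp add: G_def)
    next
      case c: False
      have "g \<alpha> 0 n k d = g \<alpha> 1 n k d"
      proof (rule ccontr)
        assume "g \<alpha> 0 n k d \<noteq> g \<alpha> 1 n k d"
        from g_diff[OF this] show False using False c by (auto simp: Q_def)
      qed
      then show ?thesis using c by (simp add: G_def k_def d_def)
    qed
    then show ?thesis unfolding ns if_not_P[OF nf] by simp
  qed
qed


lemma g_n0: "0 < k \<Longrightarrow> 0 < d \<Longrightarrow> g \<alpha> 1 0 k d = (None, None)"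
  by (auto simp: g_def)

lemma G_init: assumes ne: "\<alpha> \<noteq> []" shows "G \<alpha> 1 0 = c0 \<alpha>"
proof (rule ext, clarify)
  fix x y :: int
  let ?L = "int (length \<alpha>)"
  show "G \<alpha> 1 0 (x, y) = c0 \<alpha> (x, y)"
  proof (cases "0 < x \<or> ?L < y")
    case True then show ?thesis by (auto simp: G_def c0_def)
  next
    case False
    then have xy: "x \<le> 0" "y \<le> ?L" by auto
    show ?thesis
    proof (cases "x = 0")
      case True
      show ?thesis
      proof (cases "1 \<le> y")
        case True
        have d: "nat (?L - y) < DA \<alpha> 0" using True xy by (simp add: DA_0)
        have i: "length \<alpha> - 1 - nat (?L - y) = nat (y - 1)" using True xy by arith
        show ?thesis using d i True xy \<open>x = 0\<close> enc_some[of \<alpha> "nat (y - 1)"]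
          by (simp add: G_def c0_def gA sb_def cb_def)
      next
        case False
        have d: "\<not> nat (?L - y) < DA \<alpha> 0" using False xy by (simp add: DA_0)
        have "g \<alpha> 1 0 0 (nat (?L - y)) = (None, None)" using d by (auto simp: g_def)
        then show ?thesis using False xy \<open>x = 0\<close> by (simp add: G_def c0_def)
      qed
    next
      case False
      then have k: "0 < nat (- x)" using xy by simp
      show ?thesis
      proof (cases "y = ?L")
        case True
        obtain j where j: "nat (- x) = Suc j" using k gr0_conv_Suc by blast
        have "0 < DA \<alpha> (nat (- x))" using DA_pos[OF ne] .
        then have "g \<alpha> 1 0 (nat (- x)) 0 = (Some 0, None)" using j sb_Suc_0[of \<alpha> j] by (simp add: gA)
        then show ?thesis using True xy False by (simp add: G_def c0_def)
      next
        case c: False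
        have "g \<alpha> 1 0 (nat (- x)) (nat (?L - y)) = (None, None)" using g_n0 k c xy by simp
        then show ?thesis using c xy False by (simp add: G_def c0_def)
      qed
    qed
  qed
qed

lemma G_iter:
  assumes dig: "\<forall>d\<in>set \<alpha>. d < 3" and ne: "\<alpha> \<noteq> []"
  shows "(cqca_step ^^ n) (c0 \<alpha>) = G \<alpha> 1 n"
proof (induction n)
  case 0 then show ?case using G_init[OF ne] by simp
next
  case (Suc n)
  then show ?case using G_local[OF dig ne] G_nonlocal[OF dig ne] by (simp add: cqca_step_def)
qed


lemma the_eventually: "\<forall>n\<ge>(n0::nat). f n = w \<Longrightarrow> (THE v. \<exists>n0. \<forall>n\<ge>n0. f n = v) = w"
proof (rule the_equality)
  assume "\<forall>n\<ge>n0. f n = w" then show "\<exists>n0. \<forall>n\<ge>n0. f n = w" by blast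
next
  fix v assume a: "\<forall>n\<ge>n0. f n = w" and "\<exists>n1. \<forall>n\<ge>n1. f n = v"
  then obtain n1 where "\<forall>n\<ge>n1. f n = v" by blast
  then have "f (max n0 n1) = v" by (metis max.cobounded2)
  moreover have "f (max n0 n1) = w" using a by (metis max.cobounded1)
  ultimately show "v = w" by simp
qed

definition LimV :: "nat list \<Rightarrow> nat \<Rightarrow> nat \<Rightarrow> cell" where
  "LimV \<alpha> k d = (if d < DA \<alpha> k then (Some (sb \<alpha> k d), Some (cb \<alpha> k d))
     else if d = DA \<alpha> k then (Some 0, if odd (vv (val3 \<alpha>) k) then Some 1 else None) else (None, None))"

lemma g_lim: "0 < k \<Longrightarrow> d + k + 1 \<le> n \<Longrightarrow> g \<alpha> 1 n k d = LimV \<alpha> k d"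
  by (auto simp: g_def LimV_def)
lemma g_lim': "0 < k \<Longrightarrow> d + k + 1 \<le> n \<Longrightarrow> g \<alpha> (Suc 0) n k d = LimV \<alpha> k d"
  using g_lim by simp

lemma c_inf_val:
  assumes dig: "\<forall>d\<in>set \<alpha>. d < 3" and ne: "\<alpha> \<noteq> []" and x: "x < 0"
  shows "c_inf \<alpha> (x, y) = (if int (length \<alpha>) < y then (None, None)
            else LimV \<alpha> (nat (- x)) (nat (int (length \<alpha>) - y)))"
proof -
  let ?w = "(if int (length \<alpha>) < y then (None, None)
            else LimV \<alpha> (nat (- x)) (nat (int (length \<alpha>) - y)))"
  have "\<forall>n\<ge>nat (int (length \<alpha>) - y) + nat (- x) + 1. (cqca_step ^^ n) (c0 \<alpha>) (x, y) = ?w"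
    using x by (auto simp: G_iter[OF dig ne] G_def g_lim g_lim')
  then show ?thesis unfolding c_inf_def by (rule the_eventually)
qed

theorem mainTheorem3:
  fixes z :: nat and \<alpha> :: "nat list" and x0 :: int
  assumes "z \<ge> 1"
    and "\<forall>d\<in>set \<alpha>. d < 3" and "\<alpha> \<noteq> []" and "last \<alpha> \<noteq> 0" and "val3 \<alpha> = z"
    and "x0 < 0"
  shows "\<exists>yb::int. yb \<le> int (length \<alpha>)
     \<and> (\<forall>y<yb. fst (c_inf \<alpha> (x0, y)) = None)
     \<and> fst (c_inf \<alpha> (x0, yb)) = Some 0
     \<and> (\<forall>y. yb < y \<and> y \<le> int (length \<alpha>) \<longrightarrow>
            fst (c_inf \<alpha> (x0, y)) \<noteq> None \<and> snd (c_inf \<alpha> (x0, y)) \<noteq> None)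
     \<and> (\<Sum>y\<in>{yb<..int (length \<alpha>)}. tval (c_inf \<alpha> (x0, y)) * 3 ^ nat (y - yb - 1))
         = (collatzT ^^ nat (- x0)) z"
proof -
  note dig = assms(2) and ne = assms(3) and x = assms(6)
  let ?L = "int (length \<alpha>)"
  define k where "k = nat (- x0)"
  define D where "D = DA \<alpha> k"
  define yb where "yb = ?L - int D"
  have ci: "c_inf \<alpha> (x0, y) = (if ?L < y then (None, None) else LimV \<alpha> k (nat (?L - y)))" for y
    using c_inf_val[OF dig ne x] by (simp add: k_def)
  have DL: "length \<alpha> \<le> D" using DA_ge by (simp add: D_def)
  have p1: "yb \<le> ?L" by (simp add: yb_def)
  have p2: "\<forall>y<yb. fst (c_inf \<alpha> (x0, y)) = None"
  proof (intro allI impI)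
    fix y assume "y < yb"
    then have "D < nat (?L - y)" "\<not> ?L < y" using DL by (auto simp: yb_def)
    then show "fst (c_inf \<alpha> (x0, y)) = None" by (simp add: ci LimV_def D_def)
  qed
  have p3: "fst (c_inf \<alpha> (x0, yb)) = Some 0"
  proof -
    have "nat (?L - yb) = D" "\<not> ?L < yb" using DL by (auto simp: yb_def)
    then show ?thesis by (simp add: ci LimV_def D_def)
  qed
  have cv: "c_inf \<alpha> (x0, y) = (Some (sb \<alpha> k (nat (?L - y))), Some (cb \<alpha> k (nat (?L - y))))"
    if "yb < y" "y \<le> ?L" for y
  proof -
    have "nat (?L - y) < D" using that by (auto simp: yb_def)
    then show ?thesis using that by (simp add: ci LimV_def D_def)
  qed
  have p4: "\<forall>y. yb < y \<and> y \<le> ?L \<longrightarrow> fst (c_inf \<alpha> (x0, y)) \<noteq> None \<and> snd (c_inf \<alpha> (x0, y)) \<noteq> None"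
    using cv by auto
  have "(\<Sum>y\<in>{yb<..?L}. tval (c_inf \<alpha> (x0, y)) * 3 ^ nat (y - yb - 1))
      = (\<Sum>d<D. (sb \<alpha> k d + cb \<alpha> k d) * 3 ^ (D - 1 - d))"
  proof (rule sym, rule sum.reindex_bij_witness[where i = "\<lambda>y. nat (?L - y)" and j = "\<lambda>d. ?L - int d"])
    fix a assume "a \<in> {..<D}"
    then show "nat (?L - (?L - int a)) = a" by simp
  next
    fix a assume "a \<in> {..<D}"
    then show "?L - int a \<in> {yb<..?L}" by (auto simp: yb_def)
  next
    fix b assume "b \<in> {yb<..?L}"
    then show "?L - int (nat (?L - b)) = b" by auto
  next
    fix b assume "b \<in> {yb<..?L}"
    then show "nat (?L - b) \<in> {..<D}" by (auto simp: yb_def)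
  next
    fix a assume a: "a \<in> {..<D}"
    have e: "nat (?L - int a - yb - 1) = D - 1 - a" using a by (auto simp: yb_def)
    have "c_inf \<alpha> (x0, ?L - int a) = (Some (sb \<alpha> k a), Some (cb \<alpha> k a))"
      using cv[of "?L - int a"] a by (auto simp: yb_def)
    then show "tval (c_inf \<alpha> (x0, ?L - int a)) * 3 ^ nat (?L - int a - yb - 1) = (sb \<alpha> k a + cb \<alpha> k a) * 3 ^ (D - 1 - a)"
      using e by (simp add: tval_def)
  qed
  also have "\<dots> = hor (\<lambda>d. sb \<alpha> k d + cb \<alpha> k d) D" by (simp add: hor_sum)
  also have "\<dots> = vv (val3 \<alpha>) k" using col_val[OF dig] by (simp add: D_def)
  also have "\<dots> = (collatzT ^^ nat (- x0)) z" using assms(5) by (simp add: vv_def k_def)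
  finally have p5: "(\<Sum>y\<in>{yb<..?L}. tval (c_inf \<alpha> (x0, y)) * 3 ^ nat (y - yb - 1)) = (collatzT ^^ nat (- x0)) z" .
  show ?thesis using p1 p2 p3 p4 p5 by blast
qed

end
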